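(* Let $d\geq 2$ be a fixed integer, let $n\geq d\cdot 64^{d \log d}$ be an integer and let $k$ be a positive integer with $k \leq n^{(d-1)/d}\cdot (5d)^{1/d-2}$. Define $h = \left\lceil \left(\tfrac{9d}{2}\cdot (k+2)\right)^{1/(d-1)} -1\right\rceil$ and $m=\left\lfloor n/ \left(d\cdot (h+1)^d+ d\cdot (h+1)^{d-1}\right)\right\rfloor$, and for $i\in\{1,\dots,d\}$ let $$P_i=\bigcup^{h}_{j_1=0}\cdots \bigcup^{h}_{j_d=0}\{ (j_1 m,\dots,j_{i-1} m,x_i,j_{i+1} m,\dots,j_d m) \mid x_i\in \{0, \dots, h m\}\}\subset\mathbb{R}^d,$$ and $P_{d,n,k}=\bigcup_{i=1}^d P_i$. Then $m\geq 1$ (so $P_{d,n,k}$ is well-defined, resembling the $(h+1)^d$-grid with each grid edge subdivided into $m$ unit segments) and $|P_{d,n,k}|\leq n$. *)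

theory Defs
  imports "HOL-Analysis.Analysis"
begin

definition grid_h :: "nat \<Rightarrow> nat \<Rightarrow> int" where
  "grid_h d k = \<lceil>((9 * real d / 2) * (real k + 2)) powr (1 / (real d - 1)) - 1\<rceil>"

definition grid_m :: "nat \<Rightarrow> nat \<Rightarrow> nat \<Rightarrow> int" where
  "grid_m d n k = \<lfloor>real n / (real d * (real_of_int (grid_h d k) + 1) ^ d
                     + real d * (real_of_int (grid_h d k) + 1) ^ (d - 1))\<rfloor>"

definition grid_P_i :: "int \<Rightarrow> int \<Rightarrow> 'n::finite \<Rightarrow> (real^'n) set" where
  "grid_P_i h m i = {x. (\<forall>j. j \<noteq> i \<longrightarrow> (\<exists>t::int. 0 \<le> t \<and> t \<le> h \<and> x $ j = of_int (t * m)))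
                     \<and> (\<exists>s::int. 0 \<le> s \<and> s \<le> h * m \<and> x $ i = of_int s)}"

definition grid_P :: "nat \<Rightarrow> nat \<Rightarrow> (real^'n::finite) set" where
  "grid_P n k = (\<Union>i. grid_P_i (grid_h CARD('n) k) (grid_m CARD('n) n k) i)"

end

theory Submission
  imports Defs
begin

lemma card_Pi:
  fixes h m :: int and i :: "'n::finite"
  assumes "h \<ge> 0" "m \<ge> 0"
  shows "finite (grid_P_i h m i :: (real^'n) set) \<and>
         card (grid_P_i h m i :: (real^'n) set) \<le> nat (h+1)^(CARD('n)-1) * nat (h*m+1)"
proof -
  define f where "f = (\<lambda>(t::'n \<Rightarrow> int, s::int). (\<chi> j. if j = i then of_int s else of_int (t j * m)) :: real^'n)"
  define S where "S = PiE (UNIV - {i}) (\<lambda>_. {0..h}) \<times> {0..h*m}"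
  have sub: "grid_P_i h m i \<subseteq> f ` S"
  proof
    fix x :: "real^'n" assume "x \<in> grid_P_i h m i"
    then have A: "\<forall>j. j \<noteq> i \<longrightarrow> (\<exists>t::int. 0 \<le> t \<and> t \<le> h \<and> x $ j = of_int (t * m))"
      and "\<exists>s::int. 0 \<le> s \<and> s \<le> h * m \<and> x $ i = of_int s" unfolding grid_P_i_def by auto
    then obtain s where s: "0 \<le> s" "s \<le> h * m" "x $ i = of_int s" by blast
    define t where "t = (\<lambda>j. if j = i then undefined else (SOME t::int. 0 \<le> t \<and> t \<le> h \<and> x $ j = of_int (t * m)))"
    have t: "0 \<le> t j \<and> t j \<le> h \<and> x $ j = of_int (t j * m)" if "j \<noteq> i" for j
      using someI_ex[OF A[rule_format, OF that]] that unfolding t_def by simp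
    have "(t, s) \<in> S" unfolding S_def using t s by (auto simp: PiE_def extensional_def t_def)
    moreover have "x = f (t, s)" unfolding f_def using t s by (auto simp: vec_eq_iff)
    ultimately show "x \<in> f ` S" by blast
  qed
  have cS: "card S = nat (h+1)^(CARD('n)-1) * nat (h*m+1)"
    unfolding S_def by (simp add: card_cartesian_product card_PiE card_Diff_singleton)
  have fS: "finite S" unfolding S_def by (simp add: finite_PiE)
  show ?thesis using sub cS fS card_image_le[OF fS, of f]
    by (metis card_mono finite_imageI finite_subset order_trans)
qed


theorem lemma14:
  fixes n k :: nat
  defines "d \<equiv> CARD('n::finite)"
  assumes "d \<ge> 2"
    and "real n \<ge> real d * 64 powr (real d * log 2 (real d))"
    and "k \<ge> 1"
    and "real k \<le> real n powr ((real d - 1) / real d) * (5 * real d) powr (1 / real d - 2)"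
  shows "grid_m d n k \<ge> 1 \<and> finite (grid_P n k :: (real^'n) set)
         \<and> card (grid_P n k :: (real^'n) set) \<le> n"
proof -
  define D where "D = real d"
  have D2: "D \<ge> 2" using assms(2) unfolding D_def by simp
  define A where "A = (9*D/2)*(real k+2)"
  define a where "a = A powr (1/(D-1))"
  have "9*D/2*3 \<le> A" unfolding A_def using D2 assms(4) by (intro mult_left_mono) auto
  then have A27: "A \<ge> 27" using D2 by linarith
  have a1: "a \<ge> 1" unfolding a_def using A27 D2 by (intro ge_one_powr_ge_zero) auto
  define hh where "hh = grid_h d k"
  have hh: "hh = \<lceil>a - 1\<rceil>" unfolding hh_def grid_h_def a_def A_def D_def by simp
  define H where "H = real_of_int hh + 1"
  have Ha: "a \<le> H" "H < a + 1" unfolding H_def hh using ceiling_correct[of "a-1"] by linarith+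
  have hh0: "hh \<ge> 0" unfolding hh using a1 by simp
  have H1: "H \<ge> 1" using hh0 unfolding H_def by simp
  define X where "X = D*H^d + D*H^(d-1)"
  define mm where "mm = grid_m d n k"
  have mm: "mm = \<lfloor>real n / X\<rfloor>" unfolding mm_def grid_m_def X_def H_def hh_def D_def by simp
  have Xpos: "X > 0" unfolding X_def using H1 D2 by (simp add: add_pos_pos)
  have XH: "X = D * H^(d-1) * (H+1)"
  proof -
    have "H^d = H^(d-1)*H" using assms(2) by (metis Suc_diff_1 less_le_trans pos2 power_Suc2)
    then show ?thesis unfolding X_def by (simp add: algebra_simps)
  qed
  have Xa: "X \<le> D * (a+2)^d"
  proof -
    have "H^(d-1) * (H+1) \<le> (a+2)^(d-1) * (a+2)"
      using Ha H1 by (intro mult_mono power_mono) auto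
    also have "\<dots> = (a+2)^d" using assms(2)
      by (metis Suc_diff_1 less_le_trans pos2 power_Suc2)
    finally show ?thesis unfolding XH using D2 by (simp add: mult.assoc)
  qed
  have key: "D * (a+2)^d \<le> real n"
  proof (cases "a + 2 \<le> D^6")
    case True
    have "(a+2)^d \<le> (D^6)^d" using True a1 by (intro power_mono) auto
    also have "\<dots> = 64 powr (D * log 2 D)"
    proof -
      have h64: "(2::real) powr 6 = 64" using powr_realpow[of 2 6] by simp
      have "64 powr (D * log 2 D) = (2 powr 6) powr (D * log 2 D)" by (simp only: h64)
      also have "\<dots> = (2 powr (log 2 D)) powr (6 * D)" by (simp only: powr_powr) (simp add: mult_ac)
      also have "\<dots> = D powr (real (6*d))" using D2 unfolding D_def by simp
      also have "\<dots> = D^(6*d)" using D2 by (subst powr_realpow) auto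
      finally show ?thesis by (simp add: power_mult)
    qed
    finally have "D * (a+2)^d \<le> D * 64 powr (D * log 2 D)" using D2 by (intro mult_left_mono) auto
    then show ?thesis using assms(3) unfolding D_def by linarith
  next
    case False
    have D5: "(2::real)^5 \<le> D^5" using D2 by (intro power_mono) auto
    then have "32 * D \<le> D^5 * D" using mult_right_mono[OF D5, of D] D2 by simp
    moreover have "D^6 = D^5 * D" by (simp add: power_Suc2[symmetric] del: power_Suc)
    ultimately have "D^6 \<ge> 32 * D" by simp
    then have a31: "a \<ge> 31 * D" using False D2 by linarith
    have Aa: "A = a powr (D-1)" unfolding a_def using A27 D2 by (simp add: powr_powr)
    have "a powr 1 \<le> a powr (D-1)" using a1 D2 by (intro powr_mono) auto
    then have "a \<le> A" using Aa a1 by simp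
    then have "9*D/2*(real k + 2) \<ge> 31 * D" using a31 unfolding A_def by linarith
    then have "D * (9/2*(real k + 2)) \<ge> D * 31" by (simp add: algebra_simps)
    then have "9/2*(real k + 2) \<ge> 31" using D2 by (simp add: mult_le_cancel_left_pos)
    then have "real k > 4" by (simp add: field_simps)
    then have "k \<ge> 5" by simp
    then have k5: "real k \<ge> 5" by simp
    define q where "q = D / (D-1)"
    have q12: "q \<ge> 1" "q \<le> 2" unfolding q_def using D2 by (simp_all add: field_simps)
    have aq: "a^d = A powr q"
    proof -
      have "a^d = a powr D" unfolding D_def using a1 by (simp add: powr_realpow)
      also have "\<dots> = A powr q" unfolding a_def q_def by (simp add: powr_powr)
      finally show ?thesis .
    qed
    have e3: "(1 + 2/a)^d \<le> 3"
    proof -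
      have "(1 + 2/a)^d \<le> exp (2/a) ^ d" using a1 by (intro power_mono) auto
      also have "\<dots> = exp (D * (2/a))" unfolding D_def using exp_of_nat_mult[of d "2/a"] by simp
      also have "\<dots> \<le> exp 1" using a31 D2 a1 by (simp add: field_simps)
      also have "\<dots> \<le> 3" by (rule exp_le)
      finally show ?thesis .
    qed
    have a2: "(a+2)^d \<le> 3 * a^d"
    proof -
      have "(a+2)^d = a^d * (1 + 2/a)^d" using a1 by (simp add: power_mult_distrib[symmetric] field_simps)
      also have "\<dots> \<le> a^d * 3" using e3 a1 by (intro mult_left_mono) auto
      finally show ?thesis by simp
    qed
    define B where "B = 5 * D * real k"
    have Bpos: "B > 0" unfolding B_def using D2 k5 by simp
    have AB: "A \<le> (126/100) * B"
    proof -
      have "0 \<le> D*(18/10*real k - 9)" using D2 k5 by simp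
      then show ?thesis unfolding A_def B_def by (simp add: algebra_simps)
    qed
    have "A powr q \<le> ((126/100) * B) powr q" using AB A27 q12 by (intro powr_mono2) auto
    also have "\<dots> = (126/100) powr q * B powr q" using Bpos powr_mult[of "126/100" B q] by simp
    also have "\<dots> \<le> (126/100) powr 2 * B powr q" using q12 by (intro mult_right_mono powr_mono) auto
    also have "\<dots> = (126/100)^2 * B powr q" by (simp add: powr_realpow)
    finally have Aq: "A powr q \<le> (126/100)^2 * B powr q" .
    have Bn: "B powr q \<le> real n / (5 * D)"
    proof -
      have "real k powr q \<le> (real n powr ((D - 1) / D) * (5 * D) powr (1 / D - 2)) powr q"
        using assms(5) q12 unfolding D_def by (intro powr_mono2) auto
      also have "\<dots> = real n * (5*D) powr (- (1 + q))"
      proof -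
        have "(real n powr ((D - 1) / D) * (5 * D) powr (1 / D - 2)) powr q
              = real n powr ((D - 1) / D * q) * (5 * D) powr ((1 / D - 2) * q)"
          using D2 by (simp add: powr_mult powr_powr)
        moreover have "(D - 1) / D * q = 1" unfolding q_def using D2 by (simp add: field_simps)
        moreover have "(1 / D - 2) * q = - (1 + q)" unfolding q_def using D2 by (simp add: field_simps)
        ultimately show ?thesis by simp
      qed
      finally have kq: "real k powr q \<le> real n * (5*D) powr (- (1 + q))" .
      have "B powr q = (5*D) powr q * real k powr q" unfolding B_def using D2 by (simp add: powr_mult)
      also have "\<dots> \<le> (5*D) powr q * (real n * (5*D) powr (- (1 + q)))"
        using kq by (intro mult_left_mono) auto
      also have "\<dots> = real n * ((5*D) powr q * (5*D) powr (- (1 + q)))" by simp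
      also have "(5*D) powr q * (5*D) powr (- (1 + q)) = (5*D) powr (-1)"
        by (simp add: powr_add[symmetric])
      also have "\<dots> = 1 / (5*D)" using D2 by (simp add: powr_minus_divide)
      finally show ?thesis by simp
    qed
    have "(a+2)^d \<le> 3 * ((126/100)^2 * (real n / (5*D)))"
    proof -
      have "(126/100::real)^2 * B powr q \<le> (126/100)^2 * (real n / (5*D))"
        using Bn by (intro mult_left_mono) auto
      then show ?thesis using a2 aq Aq by linarith
    qed
    then have "D * (a+2)^d \<le> D * (3 * ((126/100)^2 * (real n / (5*D))))"
      using D2 by (intro mult_left_mono) auto
    also have "\<dots> \<le> real n" using D2 by (simp add: field_simps)
    finally show ?thesis .
  qed
  have Xn: "X \<le> real n" using Xa key by linarith
  have mm1: "mm \<ge> 1" unfolding mm using Xn Xpos by (simp add: le_divide_eq)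
  have mmX: "real_of_int mm * X \<le> real n"
    using mm Xpos by (metis of_int_floor_le pos_le_divide_eq)
  have mm0: "mm \<ge> 0" using mm1 by simp
  have GP: "(grid_P n k :: (real^'n) set) = (\<Union>i. grid_P_i hh mm i)"
    unfolding grid_P_def hh_def mm_def d_def by simp
  have fin: "finite (grid_P n k :: (real^'n) set)" unfolding GP
    using card_Pi[OF hh0 mm0] by auto
  have "card (grid_P n k :: (real^'n) set) \<le> (\<Sum>i\<in>(UNIV::'n set). card (grid_P_i hh mm i :: (real^'n) set))"
    unfolding GP by (rule card_UN_le) simp
  also have "\<dots> \<le> (\<Sum>i\<in>(UNIV::'n set). nat (hh+1)^(d-1) * nat (hh*mm+1))"
    using card_Pi[OF hh0 mm0] unfolding d_def by (intro sum_mono) auto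
  also have "\<dots> = d * (nat (hh+1)^(d-1) * nat (hh*mm+1))" unfolding d_def by simp
  finally have c1: "card (grid_P n k :: (real^'n) set) \<le> d * (nat (hh+1)^(d-1) * nat (hh*mm+1))" .
  have r1: "real (d * (nat (hh+1)^(d-1) * nat (hh*mm+1))) = D * (H^(d-1) * (real_of_int hh * real_of_int mm + 1))"
    using hh0 mm0 unfolding D_def H_def by (simp add: of_nat_nat)
  have "real_of_int hh * real_of_int mm + 1 \<le> H * real_of_int mm"
    unfolding H_def using mm1 by (simp add: algebra_simps)
  then have "D * (H^(d-1) * (real_of_int hh * real_of_int mm + 1)) \<le> D * (H^(d-1) * (H * real_of_int mm))"
    using D2 H1 by (intro mult_left_mono) auto
  also have "\<dots> = real_of_int mm * (D * H^d)"
  proof -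
    have "H^d = H^(d-1)*H" using assms(2) by (metis Suc_diff_1 less_le_trans pos2 power_Suc2)
    then show ?thesis by (simp add: mult_ac)
  qed
  also have "\<dots> \<le> real_of_int mm * X" unfolding X_def using mm0 D2 H1 by (intro mult_left_mono) auto
  finally have "real (d * (nat (hh+1)^(d-1) * nat (hh*mm+1))) \<le> real n" using r1 mmX by linarith
  then have "d * (nat (hh+1)^(d-1) * nat (hh*mm+1)) \<le> n" by linarith
  then show ?thesis using c1 fin mm1 unfolding mm_def by linarith
qed


end
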